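(* Let $\alpha\ge-1$ and $0<q<r$. Then $G_{\alpha,q}(g)\le G_{\alpha,r}(g)$ for every $g\in\mathcal{H}(\mathbb{D})$.
   Context: $\mathbb{D}$ unit disc, $\mathcal{H}(\mathbb{D})$ analytic functions, $dA$ normalized area measure, $\phi_a(z)=\frac{a-z}{1-\bar az}$. For $\alpha>-1$, $0<t<\infty$, $\|f\|_{\alpha,t}^t=(\alpha+1)\int_{\mathbb{D}}|f|^t(1-|z|^2)^\alpha dA$, and $\|f\|_{-1,t}=\|f\|_{H^t}$ (Hardy norm). For $\alpha\ge-1$, $q>0$: $G_{\alpha,q}(g)=\sup_{a\in\mathbb{D}}\bigl(\|g\circ\phi_a\|_{\alpha,2q}^{2q}-|g(a)|^{2q}\bigr)^{1/(2q)}\in[0,\infty]$. *)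

theory Defs
  imports "HOL-Analysis.Analysis"
begin

definition disc_aut :: "complex \<Rightarrow> complex \<Rightarrow> complex" where
  "disc_aut a z = (a - z) / (1 - cnj a * z)"

text \<open>Weighted Bergman quantity ||f||_{alpha,t}^t
  = (alpha+1) * integral over the unit disc of |f|^t (1-|z|^2)^alpha dA,
  with dA = (1/pi) dx dy the normalized area measure (alpha > -1).\<close>
definition bergman_pow :: "real \<Rightarrow> real \<Rightarrow> (complex \<Rightarrow> complex) \<Rightarrow> ennreal" where
  "bergman_pow \<alpha> t f = ennreal (\<alpha> + 1) *
     (\<integral>\<^sup>+ z. indicator (ball 0 1) z *
        ennreal (cmod (f z) powr t * (1 - (cmod z)\<^sup>2) powr \<alpha> / pi) \<partial>lborel)"

definition hardy_pow :: "real \<Rightarrow> (complex \<Rightarrow> complex) \<Rightarrow> ennreal" where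
  "hardy_pow t f = (SUP \<rho>\<in>{0<..<1}.
     \<integral>\<^sup>+ \<theta>. indicator {0..2*pi} \<theta> *
        ennreal (cmod (f (complex_of_real \<rho> * exp (\<i> * complex_of_real \<theta>))) powr t / (2*pi)) \<partial>lborel)"

definition norm_pow :: "real \<Rightarrow> real \<Rightarrow> (complex \<Rightarrow> complex) \<Rightarrow> ennreal" where
  "norm_pow \<alpha> t f = (if \<alpha> = -1 then hardy_pow t f else bergman_pow \<alpha> t f)"

definition eroot :: "real \<Rightarrow> ennreal \<Rightarrow> ennreal" where
  "eroot p x = (if x = top then top else ennreal (enn2real x powr (1 / p)))"

text \<open>G_{alpha,q}(g) = sup_a (||g o phi_a||_{alpha,2q}^{2q} - |g(a)|^{2q})^{1/(2q)} in [0,infinity].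
  (Truncated subtraction of ennreal; the difference is nonnegative anyway.)\<close>
definition G :: "real \<Rightarrow> real \<Rightarrow> (complex \<Rightarrow> complex) \<Rightarrow> ennreal" where
  "G \<alpha> q g = (SUP a\<in>ball 0 1.
     eroot (2*q) (norm_pow \<alpha> (2*q) (g \<circ> disc_aut a) - ennreal (cmod (g a) powr (2*q))))"

end

theory Submission
  imports Defs "HOL-Complex_Analysis.Complex_Analysis"
begin

lemma powr_subadd:
  fixes x y s :: real
  assumes "x \<ge> 0" "y \<ge> 0" "0 < s" "s \<le> 1"
  shows "(x + y) powr s \<le> x powr s + y powr s"
proof (cases "x + y = 0")
  case True then show ?thesis using assms by auto
next
  case False
  hence S: "x + y > 0" using assms by linarith
  define X where "X = x / (x+y)"
  define Y where "Y = y / (x+y)"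
  have X: "0 \<le> X" "X \<le> 1" using assms S by (auto simp: X_def)
  have Y: "0 \<le> Y" "Y \<le> 1" using assms S by (auto simp: Y_def)
  have "X \<le> X powr s" using powr_mono'[of s 1 X] X assms by simp
  moreover have "Y \<le> Y powr s" using powr_mono'[of s 1 Y] Y assms by simp
  moreover have "X + Y = 1" using S by (simp add: X_def Y_def flip: add_divide_distrib)
  ultimately have "1 \<le> X powr s + Y powr s" by linarith
  hence "(x+y) powr s * 1 \<le> (x+y) powr s * (X powr s + Y powr s)" by (intro mult_left_mono) auto
  also have "\<dots> = x powr s + y powr s"
    using S assms by (simp add: X_def Y_def powr_divide distrib_left)
  finally show ?thesis by simp
qed

lemma jensen_pow:
  fixes u :: "'a \<Rightarrow> real"
  assumes M1: "emeasure M (space M) \<le> 1" and um[measurable]: "u \<in> borel_measurable M"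
    and u0: "\<And>x. u x \<ge> 0" and s: "0 < s" "s \<le> 1"
    and I: "(\<integral>\<^sup>+x. ennreal (u x) \<partial>M) \<le> ennreal A" and A0: "A \<ge> 0"
  shows "(\<integral>\<^sup>+x. ennreal (u x powr s) \<partial>M) \<le> ennreal (A powr s)"
proof (cases "A = 0")
  case True
  hence "(\<integral>\<^sup>+x. ennreal (u x) \<partial>M) = 0" using I by simp
  hence "AE x in M. ennreal (u x) = 0" by (subst (asm) nn_integral_0_iff_AE) auto
  hence "AE x in M. ennreal (u x powr s) = 0" by eventually_elim (use u0 in auto)
  hence "(\<integral>\<^sup>+x. ennreal (u x powr s) \<partial>M) = 0" by (subst nn_integral_0_iff_AE) auto
  then show ?thesis by simp
next
  case False
  hence A: "A > 0" using A0 by simp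
  have Ae: "A powr (s-1) * A = A powr s" using A by (simp add: powr_diff)
  have pt: "u x powr s \<le> s * A powr (s-1) * u x + (1-s) * A powr s" for x
  proof (cases "u x = 0")
    case True then show ?thesis using A s by auto
  next
    case False
    hence ux: "u x > 0" using u0[of x] by simp
    have "u x powr s * A powr (1-s) \<le> s * u x + (1-s) * A"
      using Youngs_inequality_0[of s "1-s" "u x" A] s ux A by auto
    hence "A powr (s-1) * (u x powr s * A powr (1-s)) \<le> A powr (s-1) * (s * u x + (1-s) * A)"
      by (intro mult_left_mono) auto
    moreover have "A powr (s-1) * (u x powr s * A powr (1-s)) = u x powr s"
      using A by (simp add: mult.assoc mult.left_commute[of "A powr (s-1)"] flip: powr_add)
    moreover have "A powr (s-1) * (s * u x + (1-s) * A) = s * A powr (s-1) * u x + (1-s) * A powr s"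
      unfolding Ae[symmetric] by (simp add: algebra_simps)
    ultimately show ?thesis by simp
  qed
  define c1 where "c1 = s * A powr (s-1)"
  define c2 where "c2 = (1-s) * A powr s"
  have c1: "c1 \<ge> 0" and c2: "c2 \<ge> 0" using s A by (auto simp: c1_def c2_def)
  have "(\<integral>\<^sup>+x. ennreal (u x powr s) \<partial>M) \<le>
      (\<integral>\<^sup>+x. ennreal c1 * ennreal (u x) + ennreal c2 \<partial>M)"
  proof (intro nn_integral_mono)
    fix x
    have "ennreal c1 * ennreal (u x) + ennreal c2 = ennreal (c1 * u x + c2)"
      using c1 c2 u0[of x] by (simp add: ennreal_mult)
    moreover have "ennreal (u x powr s) \<le> ennreal (c1 * u x + c2)"
      using pt[of x] by (intro ennreal_leI) (simp add: c1_def c2_def)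
    ultimately show "ennreal (u x powr s) \<le> ennreal c1 * ennreal (u x) + ennreal c2" by simp
  qed
  also have "\<dots> = ennreal c1 * (\<integral>\<^sup>+x. ennreal (u x) \<partial>M) + ennreal c2 * emeasure M (space M)"
    by (subst nn_integral_add) (auto simp: nn_integral_cmult)
  also have "\<dots> \<le> ennreal c1 * ennreal A + ennreal c2 * 1"
    by (intro add_mono mult_left_mono I M1) auto
  also have "\<dots> = ennreal (c1 * A + c2)"
    using c1 c2 A by (simp add: ennreal_mult)
  also have "c1 * A + c2 = A powr s"
    unfolding c1_def c2_def Ae[symmetric] by (simp add: algebra_simps)
  finally show ?thesis .
qed


lemma sq_lt1: "0 \<le> (a::real) \<Longrightarrow> a < 1 \<Longrightarrow> a\<^sup>2 < 1"
  by (metis power_strict_mono one_power2 zero_less_numeral)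

lemma sq_lt1': "0 \<le> (a::real) \<Longrightarrow> a\<^sup>2 < 1 \<Longrightarrow> a < 1"
  by (metis not_less one_le_power)

lemma ball_sqrt_eq:
  fixes x :: real assumes "0 \<le> x" "x < 1"
  shows "ball (0::complex) 1 \<inter> {z. x < 1 - (cmod z)\<^sup>2} = ball 0 (sqrt (1 - x))"
proof -
  have "cmod z < sqrt (1 - x) \<longleftrightarrow> (cmod z)\<^sup>2 < 1 - x" for z
    by (metis norm_ge_zero real_sqrt_abs real_sqrt_less_iff abs_of_nonneg)
  moreover have "sqrt (1 - x) \<le> 1" using assms by simp
  ultimately show ?thesis using assms sq_lt1'[of "cmod _"] by (auto simp: dist_norm)
qed

lemma emeasure_disc_level:
  fixes x :: real
  shows "emeasure lborel (ball (0::complex) 1 \<inter> {z. x < 1 - (cmod z)\<^sup>2}) =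
         ennreal (pi * min 1 (max 0 (1 - x)))"
proof -
  consider "x < 0" | "0 \<le> x" "x < 1" | "1 \<le> x" by linarith
  then show ?thesis
  proof cases
    case 1
    have "ball (0::complex) 1 \<inter> {z. x < 1 - (cmod z)\<^sup>2} = ball 0 1"
      using 1 sq_lt1[of "cmod _"] by (force simp: dist_norm)
    then show ?thesis using 1 by (simp add: emeasure_ball unit_ball_vol_2)
  next
    case 2
    then show ?thesis by (simp add: ball_sqrt_eq emeasure_ball unit_ball_vol_2)
  next
    case 3
    have "ball (0::complex) 1 \<inter> {z. x < 1 - (cmod z)\<^sup>2} = {}"
      using 3 by (auto simp: dist_norm) (smt (verit) zero_le_power2)
    then show ?thesis using 3 by simp
  qed
qed

lemma distr_disc:
  "distr (density lborel (\<lambda>z::complex. ennreal (1/pi) * indicator (ball 0 1) z)) borel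
     (\<lambda>z. 1 - (cmod z)\<^sup>2) = density lborel (indicator {0..1::real})"
    (is "?N = ?L")
proof -
  have [measurable]: "ball (0::complex) 1 \<in> sets borel" by simp
  have eq: "emeasure ?N {x<..} = ennreal (min 1 (max 0 (1 - x)))" for x
  proof -
    have "emeasure ?N {x<..} = emeasure (density lborel (\<lambda>z::complex. ennreal (1/pi) * indicator (ball 0 1) z))
         {z. x < 1 - (cmod z)\<^sup>2}"
      by (subst emeasure_distr) (auto simp: vimage_def)
    also have "\<dots> = (\<integral>\<^sup>+z. ennreal (1/pi) * indicator (ball 0 1 \<inter> {z. x < 1 - (cmod z)\<^sup>2}) z \<partial>lborel)"
      by (subst emeasure_density) (auto intro!: nn_integral_cong simp: indicator_def)
    also have "\<dots> = ennreal (1/pi) * emeasure lborel (ball (0::complex) 1 \<inter> {z. x < 1 - (cmod z)\<^sup>2})"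
      by (subst nn_integral_cmult_indicator) auto
    also have "\<dots> = ennreal (min 1 (max 0 (1 - x)))"
      by (simp add: emeasure_disc_level ennreal_mult[symmetric] del: ennreal_plus)
    finally show ?thesis .
  qed
  have eq2: "emeasure ?L {x<..} = ennreal (min 1 (max 0 (1 - x)))" for x
  proof -
    have "emeasure ?L {x<..} = emeasure lborel ({0..1} \<inter> {x<..})"
      by (subst emeasure_density) (auto intro!: nn_integral_cong simp: indicator_def 
           simp flip: nn_integral_indicator)
    also have "\<dots> = ennreal (min 1 (max 0 (1 - x)))"
    proof -
      consider "x < 0" | "0 \<le> x" "x < 1" | "1 \<le> x" by linarith
      then show ?thesis
      proof cases
        case 1
        then have "{0..1} \<inter> {x<..} = {0..(1::real)}" by auto
        then show ?thesis using 1 by simp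
      next
        case 2
        then have "{0..1} \<inter> {x<..} = {x<..(1::real)}" by auto
        then show ?thesis using 2 by simp
      next
        case 3
        then have "{0..1} \<inter> {x<..} = ({}::real set)" by auto
        then show ?thesis using 3 by simp
      qed
    qed
    finally show ?thesis .
  qed
  show ?thesis
    by (rule measure_eqI_lessThan) (auto simp: eq eq2)
qed

lemma bergman_mass:
  fixes \<alpha> :: real assumes "\<alpha> > -1"
  shows "(\<integral>\<^sup>+ z. ennreal (indicator (ball 0 1) z * (\<alpha>+1) * (1 - (cmod z)\<^sup>2) powr \<alpha> / pi) \<partial>lborel) = 1"
proof -
  have [measurable]: "ball (0::complex) 1 \<in> sets borel" by simp
  let ?f = "\<lambda>t::real. ennreal ((\<alpha>+1) * t powr \<alpha>)"
  have "(\<integral>\<^sup>+ z. ennreal (indicator (ball 0 1) z * (\<alpha>+1) * (1 - (cmod z)\<^sup>2) powr \<alpha> / pi) \<partial>lborel)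
     = (\<integral>\<^sup>+ z. ?f (1 - (cmod z)\<^sup>2) \<partial>density lborel (\<lambda>z::complex. ennreal (1/pi) * indicator (ball 0 1) z))"
    using assms by (subst nn_integral_density) (auto intro!: nn_integral_cong simp: indicator_def ennreal_mult[symmetric] del: ennreal_plus)
  also have "\<dots> = (\<integral>\<^sup>+ t. ?f t \<partial>distr (density lborel (\<lambda>z::complex. ennreal (1/pi) * indicator (ball 0 1) z)) borel
     (\<lambda>z. 1 - (cmod z)\<^sup>2))"
    by (subst nn_integral_distr) auto
  also have "\<dots> = (\<integral>\<^sup>+ t. ?f t \<partial>density lborel (indicator {0..1::real}))"
    by (simp add: distr_disc)
  also have "\<dots> = (\<integral>\<^sup>+ t. ennreal (indicator {0..1::real} t * ((\<alpha>+1) * t powr \<alpha>)) \<partial>lborel)"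
    by (subst nn_integral_density) (auto intro!: nn_integral_cong simp: indicator_def)
  also have "\<dots> = ennreal ((\<alpha>+1) * (1 powr (\<alpha>+1) / (\<alpha>+1)))"
    using assms by (intro nn_integral_has_integral_lebesgue has_integral_mult_right has_integral_powr_from_0) auto
  also have "\<dots> = 1" using assms by simp
  finally show ?thesis .
qed


lemma eroot_mono:
  assumes "0 < p" "x \<le> y"
  shows "eroot p x \<le> eroot p y"
proof (cases "y = top")
  case True then show ?thesis by (simp add: eroot_def)
next
  case False
  hence "x \<noteq> top" using assms(2) top_unique by fastforce
  moreover have "enn2real x \<le> enn2real y" using False assms(2) by (intro enn2real_mono) (auto simp: less_top)
  ultimately show ?thesis using False assms
    by (auto simp: eroot_def intro!: ennreal_leI powr_mono2)
qed

lemma hardy_mono: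
  fixes f :: "complex \<Rightarrow> complex"
  assumes cont: "continuous_on (ball 0 1) f" and qr: "0 < q" "q < r"
    and P: "hardy_pow (2*r) f \<le> ennreal A" and A0: "A \<ge> 0"
  shows "hardy_pow (2*q) f \<le> ennreal (A powr (q/r))"
  unfolding hardy_pow_def
proof (intro SUP_least)
  fix \<rho> :: real assume \<rho>: "\<rho> \<in> {0<..<1}"
  define H where "H = density lborel (\<lambda>\<theta>::real. ennreal (indicator {0..2*pi} \<theta> / (2*pi)))"
  define h where "h = (\<lambda>\<theta>::real. cmod (f (complex_of_real \<rho> * exp (\<i> * complex_of_real \<theta>))))"
  have hc: "continuous_on UNIV h"
  proof -
    have "continuous_on UNIV (\<lambda>\<theta>::real. complex_of_real \<rho> * exp (\<i> * complex_of_real \<theta>))"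
      by (intro continuous_intros)
    moreover have "(\<lambda>\<theta>::real. complex_of_real \<rho> * exp (\<i> * complex_of_real \<theta>)) ` UNIV \<subseteq> ball 0 1"
      using \<rho> by (auto simp: norm_mult)
    ultimately show ?thesis unfolding h_def
      by (intro continuous_intros continuous_on_compose2[OF cont]) auto
  qed
  have hm[measurable]: "h \<in> borel_measurable borel" using hc by (rule borel_measurable_continuous_onI)
  have trm: "(\<integral>\<^sup>+ \<theta>. indicator {0..2*pi} \<theta> * ennreal (h \<theta> powr t / (2*pi)) \<partial>lborel)
       = (\<integral>\<^sup>+ \<theta>. ennreal (h \<theta> powr t) \<partial>H)" for t
    unfolding H_def
    by (subst nn_integral_density) (auto intro!: nn_integral_cong simp: indicator_def ennreal_mult'[symmetric])
  have mass: "emeasure H (space H) = 1"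
  proof -
    have "emeasure H (space H) = (\<integral>\<^sup>+ \<theta>. ennreal (indicator {0..2*pi} \<theta> * (1 / (2*pi))) \<partial>lborel)"
      unfolding H_def by (subst emeasure_density) (auto intro!: nn_integral_cong simp: indicator_def)
    also have "\<dots> = ennreal ((1 / (2*pi)) * (2*pi - 0))"
      by (intro nn_integral_has_integral_lebesgue has_integral_const_real[THEN has_integral_eq_rhs]) auto
    also have "\<dots> = 1" by simp
    finally show ?thesis .
  qed
  define u where "u = (\<lambda>\<theta>. h \<theta> powr (2*r))"
  have h0: "\<And>\<theta>. h \<theta> \<ge> 0" by (simp add: h_def)
  have um: "u \<in> borel_measurable H"
  proof -
    have "continuous_on UNIV u" unfolding u_def
      using qr h0 by (intro continuous_on_powr' hc continuous_intros) auto
    then show ?thesis unfolding H_def by (simp add: borel_measurable_continuous_onI)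
  qed
  have "(\<integral>\<^sup>+ \<theta>. ennreal (u \<theta>) \<partial>H) =
     (\<integral>\<^sup>+ \<theta>. indicator {0..2*pi} \<theta> * ennreal (h \<theta> powr (2*r) / (2*pi)) \<partial>lborel)"
    by (simp only: trm u_def)
  also have "\<dots> \<le> hardy_pow (2*r) f"
    unfolding hardy_pow_def h_def by (rule SUP_upper) (use \<rho> in auto)
  also have "\<dots> \<le> ennreal A" by (rule P)
  finally have uA: "(\<integral>\<^sup>+ \<theta>. ennreal (u \<theta>) \<partial>H) \<le> ennreal A" .
  have "(\<integral>\<^sup>+ \<theta>. ennreal (u \<theta> powr (q/r)) \<partial>H) \<le> ennreal (A powr (q/r))"
    by (rule jensen_pow[OF _ um _ _ _ uA A0]) (use mass qr h0 in \<open>auto simp: u_def\<close>)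
  moreover have "u \<theta> powr (q/r) = h \<theta> powr (2*q)" for \<theta>
    using qr h0[of \<theta>] by (simp add: u_def powr_powr)
  ultimately have "(\<integral>\<^sup>+ \<theta>. ennreal (h \<theta> powr (2*q)) \<partial>H) \<le> ennreal (A powr (q/r))" by simp
  then show "(\<integral>\<^sup>+ \<theta>. indicator {0..2*pi} \<theta> *
        ennreal (cmod (f (complex_of_real \<rho> * exp (\<i> * complex_of_real \<theta>))) powr (2*q) / (2*pi)) \<partial>lborel)
     \<le> ennreal (A powr (q/r))"
    using trm[of "2*q"] unfolding h_def by simp
qed


lemma bergman_mono:
  fixes f :: "complex \<Rightarrow> complex"
  assumes cont: "continuous_on (ball 0 1) f" and qr: "0 < q" "q < r" and al: "\<alpha> > -1"
    and P: "bergman_pow \<alpha> (2*r) f \<le> ennreal A" and A0: "A \<ge> 0"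
  shows "bergman_pow \<alpha> (2*q) f \<le> ennreal (A powr (q/r))"
proof -
  have [measurable]: "ball (0::complex) 1 \<in> sets borel" by simp
  define M where "M = density lborel (\<lambda>z::complex. ennreal (indicator (ball 0 1) z * (\<alpha>+1) * (1 - (cmod z)\<^sup>2) powr \<alpha> / pi))"
  define v where "v = (\<lambda>t z. indicator (ball 0 1) z * cmod (f z) powr t)"
  have vm: "v t \<in> borel_measurable borel" if "t > 0" for t
  proof -
    have "continuous_on (ball 0 1) (\<lambda>z. cmod (f z) powr t)"
      using that by (intro continuous_on_powr' cont continuous_intros) auto
    from borel_measurable_continuous_on_indicator[OF _ this] show ?thesis
      by (simp add: v_def)
  qed
  have v0: "v t z \<ge> 0" for t z by (simp add: v_def)
  have bp: "bergman_pow \<alpha> t f = (\<integral>\<^sup>+ z. ennreal (v t z) \<partial>M)" if "t > 0" for t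
  proof -
    have [measurable]: "v t \<in> borel_measurable borel" using vm that .
    have "(\<integral>\<^sup>+ z. ennreal (v t z) \<partial>M) = (\<integral>\<^sup>+ z. ennreal (indicator (ball 0 1) z * (\<alpha>+1) * (1 - (cmod z)\<^sup>2) powr \<alpha> / pi) * ennreal (v t z) \<partial>lborel)"
      unfolding M_def by (subst nn_integral_density) auto
    also have "\<dots> = (\<integral>\<^sup>+ z. ennreal (\<alpha>+1) * (indicator (ball 0 1) z * ennreal (cmod (f z) powr t * (1 - (cmod z)\<^sup>2) powr \<alpha> / pi)) \<partial>lborel)"
      using al by (intro nn_integral_cong) (auto simp: v_def indicator_def ennreal_mult'[symmetric] mult_ac)
    also have "\<dots> = bergman_pow \<alpha> t f"
    proof -
      have e: "(\<lambda>z. indicator (ball 0 1) z * ennreal (cmod (f z) powr t * (1 - (cmod z)\<^sup>2) powr \<alpha> / pi))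
          = (\<lambda>z. ennreal (v t z * (1 - (cmod z)\<^sup>2) powr \<alpha> / pi))"
        by (auto simp: v_def indicator_def fun_eq_iff)
      have "(\<lambda>z. indicator (ball 0 1) z * ennreal (cmod (f z) powr t * (1 - (cmod z)\<^sup>2) powr \<alpha> / pi))
          \<in> borel_measurable borel" unfolding e by measurable
      then show ?thesis unfolding bergman_pow_def by (subst nn_integral_cmult) auto
    qed
    finally show ?thesis by simp
  qed
  have mass: "emeasure M (space M) = 1"
    unfolding M_def using bergman_mass[OF al]
    by (subst emeasure_density) auto
  have um: "v (2*r) \<in> borel_measurable M" using vm[of "2*r"] qr unfolding M_def by simp
  have uA: "(\<integral>\<^sup>+ z. ennreal (v (2*r) z) \<partial>M) \<le> ennreal A" using P bp[of "2*r"] qr by simp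
  have "(\<integral>\<^sup>+ z. ennreal (v (2*r) z powr (q/r)) \<partial>M) \<le> ennreal (A powr (q/r))"
    by (rule jensen_pow[OF _ um _ _ _ uA A0]) (use mass qr v0 in auto)
  moreover have "v (2*r) z powr (q/r) = v (2*q) z" for z
    using qr by (simp add: v_def powr_powr indicator_def)
  ultimately show ?thesis using bp[of "2*q"] qr by simp
qed


lemma disc_aut_props:
  assumes a: "a \<in> ball (0::complex) 1"
  shows "continuous_on (ball 0 1) (disc_aut a)" "disc_aut a ` ball 0 1 \<subseteq> ball 0 1"
proof -
  have nz: "1 - cnj a * z \<noteq> 0" if "z \<in> ball 0 1" for z
  proof
    assume "1 - cnj a * z = 0"
    hence "cmod (cnj a * z) = 1" by (metis norm_one right_minus_eq)
    moreover have "cmod (cnj a * z) < 1"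
      using a that by (simp add: norm_mult) (metis mult_strict_mono' norm_ge_zero mult_1_right
          mult_less_cancel_left1 order_le_less_trans less_eq_real_def)
    ultimately show False by simp
  qed
  show "continuous_on (ball 0 1) (disc_aut a)"
    unfolding disc_aut_def by (intro continuous_intros) (use nz in auto)
  show "disc_aut a ` ball 0 1 \<subseteq> ball 0 1"
  proof
    fix w assume "w \<in> disc_aut a ` ball 0 1"
    then obtain z where z: "z \<in> ball 0 1" "w = disc_aut a z" by auto
    have "disc_aut a z = - Moebius_function 0 a z"
      by (simp add: Moebius_function_simple disc_aut_def minus_divide_left)
    hence "cmod w = cmod (Moebius_function 0 a z)" using z by simp
    also have "\<dots> < 1" using a z by (intro Moebius_function_norm_lt_1) auto
    finally show "w \<in> ball 0 1" by simp
  qed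
qed

theorem proposition2p10:
  fixes \<alpha> q r :: real and g :: "complex \<Rightarrow> complex"
  assumes "\<alpha> \<ge> -1" and "0 < q" and "q < r"
    and "g holomorphic_on ball 0 1"
  shows "G \<alpha> q g \<le> G \<alpha> r g"
  unfolding G_def
proof (intro SUP_least)
  fix a :: complex assume a: "a \<in> ball 0 1"
  define f where "f = g \<circ> disc_aut a"
  have cont: "continuous_on (ball 0 1) f"
    unfolding f_def using disc_aut_props[OF a] holomorphic_on_imp_continuous_on[OF assms(4)]
    by (auto simp: comp_def intro!: continuous_on_compose2[where g=g and t="ball 0 1"])
  define c where "c = cmod (g a)"
  have c0: "c \<ge> 0" by (simp add: c_def)
  have le_r: "eroot (2*r) (norm_pow \<alpha> (2*r) f - ennreal (c powr (2*r)))
      \<le> (SUP a\<in>ball 0 1. eroot (2*r) (norm_pow \<alpha> (2*r) (g \<circ> disc_aut a) - ennreal (cmod (g a) powr (2*r))))"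
    unfolding f_def c_def by (rule SUP_upper) (rule a)
  show "eroot (2*q) (norm_pow \<alpha> (2*q) (g \<circ> disc_aut a) - ennreal (cmod (g a) powr (2*q)))
      \<le> (SUP a\<in>ball 0 1. eroot (2*r) (norm_pow \<alpha> (2*r) (g \<circ> disc_aut a) - ennreal (cmod (g a) powr (2*r))))"
  proof (cases "norm_pow \<alpha> (2*r) f = top")
    case True
    hence "eroot (2*r) (norm_pow \<alpha> (2*r) f - ennreal (c powr (2*r))) = top"
      by (simp add: eroot_def)
    with le_r have "(SUP a\<in>ball 0 1. eroot (2*r) (norm_pow \<alpha> (2*r) (g \<circ> disc_aut a) - ennreal (cmod (g a) powr (2*r)))) = top"
      by (metis top_unique)
    then show ?thesis by (metis top_greatest)
  next
    case False
    then obtain A where A: "norm_pow \<alpha> (2*r) f = ennreal A" "A \<ge> 0"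
      by (cases "norm_pow \<alpha> (2*r) f") auto
    define s where "s = q / r"
    have s: "0 < s" "s \<le> 1" using assms by (auto simp: s_def)
    have Pq: "norm_pow \<alpha> (2*q) f \<le> ennreal (A powr s)"
    proof (cases "\<alpha> = -1")
      case True
      then show ?thesis using A hardy_mono[OF cont assms(2,3), of A]
        by (simp add: norm_pow_def s_def)
    next
      case False
      hence "\<alpha> > -1" using assms(1) by simp
      then show ?thesis using A bergman_mono[OF cont assms(2,3), of \<alpha> A] False
        by (simp add: norm_pow_def s_def)
    qed
    define B where "B = c powr (2*r)"
    define D where "D = max 0 (A - B)"
    have B0: "B \<ge> 0" and D0: "D \<ge> 0" by (auto simp: B_def D_def)
    have "A powr s \<le> (B + D) powr s"
      using A s B0 D0 by (intro powr_mono2) (auto simp: D_def)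
    also have "\<dots> \<le> B powr s + D powr s" using B0 D0 s by (rule powr_subadd)
    also have "B powr s = c powr (2*q)"
      using assms c0 by (simp add: B_def s_def powr_powr)
    finally have AD: "A powr s \<le> c powr (2*q) + D powr s" .
    have "norm_pow \<alpha> (2*q) f \<le> ennreal (c powr (2*q)) + ennreal (D powr s)"
      using Pq AD by (metis order.trans ennreal_leI ennreal_plus powr_ge_zero)
    hence "norm_pow \<alpha> (2*q) f - ennreal (c powr (2*q)) \<le> ennreal (D powr s)"
      by (simp add: ennreal_minus_le_iff)
    hence "eroot (2*q) (norm_pow \<alpha> (2*q) f - ennreal (c powr (2*q))) \<le> eroot (2*q) (ennreal (D powr s))"
      using assms by (intro eroot_mono) auto
    also have "eroot (2*q) (ennreal (D powr s)) = ennreal (D powr (1/(2*r)))"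
      using assms D0 by (simp add: eroot_def powr_powr s_def mult.commute)
    also have "\<dots> = eroot (2*r) (norm_pow \<alpha> (2*r) f - ennreal (c powr (2*r)))"
    proof -
      have "norm_pow \<alpha> (2*r) f - ennreal (c powr (2*r)) = ennreal D"
        using A by (simp add: ennreal_minus B_def D_def ennreal_max_0)
      then show ?thesis using D0 by (simp add: eroot_def)
    qed
    finally show ?thesis using le_r unfolding f_def c_def by simp
  qed
qed

end
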